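(* Consider the discrete-time system $$\begin{bmatrix}\mathbf{x}^1_{t+1}\\ \mathbf{x}^2_{t+1}\end{bmatrix}=\begin{bmatrix}\mathbf{A}_{11}&\mathbf{A}_{12}\\ \mathbf{A}_{21}&\mathbf{A}_{22}\end{bmatrix}\begin{bmatrix}\mathbf{x}^1_{t}\\ \mathbf{x}^2_{t}\end{bmatrix}+\mathbf{B}\mathbf{u}_t+\mathbf{w}_t,$$ with $\mathbf{x}^1_t\in\mathbb{R}^n$, $\mathbf{x}^2_t\in\mathbb{R}^m$, state $\mathbf{x}_t=[(\mathbf{x}^1_t)^{\mathrm T},(\mathbf{x}^2_t)^{\mathrm T}]^{\mathrm T}$, and $\mathbf{w}_t\sim\mathcal N(\mathbf 0,\mathrm{diag}(\mathbf W_{11},\mathbf W_{22}))$ i.i.d. with $\mathbf W_{11},\mathbf W_{22}\succ0$. An encoder observes the full state and at each time $t$ emits a binary codeword $\mathbf a_t\in\{0,1\}^*$ according to an arbitrary (possibly randomized) causal policy $\mathbb P(\mathbf a_t\mid \mathbf x_{1:t},\mathbf a_{1:t-1})$; at each $t$ the set $\mathcal A_t=\{\mathsf a\in\{0,1\}^*:\mathbb P(\mathbf a_t=\mathsf a)>0\}$ is prefix-free (no element is a prefix of a different element). A decoder/controller observes $\mathbf a_{1:t}$ and the side information $\mathbf x^2_{1:t}$ and chooses $\mathbf u_t$ according to an arbitrary (possibly randomized) causal policy $\mathbb P(\mathbf u_t\mid \mathbf a_{1:t},\mathbf x^2_{1:t},\mathbf u_{1:t-1})$. Let $\ell(\mathbf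 a_t)$ denote the length in bits of $\mathbf a_t$. Then for every $T\ge1$, and for any such encoder and decoder/controller policies, $$\sum_{t=1}^{T}\mathbb E[\ell(\mathbf a_t)]\ \ge\ I(\mathbf x_{1:T}\rightarrow\mathbf a_{1:T}\,\|\,\mathbf x^2_{1:T}).$$
   Context: The causally conditioned directed information is defined by $I(\mathbf p_{1:T}\rightarrow\mathbf q_{1:T}\,\|\,\mathbf r_{1:T})=\sum_{t=1}^T I(\mathbf p_{1:t};\mathbf q_t\mid \mathbf q_{1:t-1},\mathbf r_{1:t})$, where $I$ denotes (conditional) mutual information. $\mathbf u_t\in\mathbb R^{u}$, $\mathbf B\in\mathbb R^{(n+m)\times u}$, $(\mathbf A,\mathbf B)$ stabilizable. All probabilities and expectations are with respect to the joint law induced by the plant dynamics and the policies. *)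

theory Defs
  imports "HOL-Probability.Probability" "HOL-Library.Sublist"
begin

definition hist :: "(nat \<Rightarrow> 'w \<Rightarrow> 'b) \<Rightarrow> nat set \<Rightarrow> 'w \<Rightarrow> (nat \<Rightarrow> 'b)" where
  "hist p I = (\<lambda>\<omega>. restrict (\<lambda>i. p i \<omega>) I)"

definition sigma_of :: "'w measure \<Rightarrow> ('w \<Rightarrow> 'b) \<Rightarrow> 'b measure \<Rightarrow> 'w measure" where
  "sigma_of M X N = vimage_algebra (space M) X N"

definition cprob :: "'w measure \<Rightarrow> 'w measure \<Rightarrow> ('w \<Rightarrow> 'c) \<Rightarrow> 'c \<Rightarrow> 'w \<Rightarrow> real" where
  "cprob M F Y y = (\<lambda>\<omega>. enn2real (nn_cond_exp M F (indicator {\<omega>\<in>space M. Y \<omega> = y}) \<omega>))"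

definition kl_term :: "real \<Rightarrow> real \<Rightarrow> ereal" where
  "kl_term p q = (if p = 0 then 0 else if q = 0 then \<infinity> else ereal (p * log 2 (p / q)))"

definition disc_KL :: "('c::countable \<Rightarrow> real) \<Rightarrow> ('c \<Rightarrow> real) \<Rightarrow> ereal" where
  "disc_KL p q =
     enn2ereal (\<integral>\<^sup>+ y. e2ennreal (kl_term (p y) (q y)) \<partial>count_space UNIV)
   - enn2ereal (\<integral>\<^sup>+ y. e2ennreal (- kl_term (p y) (q y)) \<partial>count_space UNIV)"

text \<open>Conditional mutual information I(X; Y | Z) (in bits) for a discrete (countably valued) Y and
  arbitrary X, Z: the expected KL divergence between the conditional law of Y given (X,Z)
  and the conditional law of Y given Z.\<close>
definition cond_mi ::
  "'w measure \<Rightarrow> ('w \<Rightarrow> 'x) \<Rightarrow> 'x measure \<Rightarrow> ('w \<Rightarrow> 'c::countable) \<Rightarrow> ('w \<Rightarrow> 'z) \<Rightarrow> 'z measure \<Rightarrow> ennreal"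
  where
  "cond_mi M X MX Y Z MZ =
     (\<integral>\<^sup>+ \<omega>. e2ennreal (disc_KL
          (\<lambda>y. cprob M (sigma_of M (\<lambda>\<omega>. (X \<omega>, Z \<omega>)) (MX \<Otimes>\<^sub>M MZ)) Y y \<omega>)
          (\<lambda>y. cprob M (sigma_of M Z MZ) Y y \<omega>)) \<partial>M)"

text \<open>Causally conditioned directed information
  I(p_{1:T} -> q_{1:T} || r_{1:T}) = sum_{t=1}^T I(p_{1:t}; q_t | q_{1:t-1}, r_{1:t}),
  for a discrete process q.\<close>
definition dir_info_cc ::
  "'w measure \<Rightarrow> (nat \<Rightarrow> 'w \<Rightarrow> 'p) \<Rightarrow> 'p measure \<Rightarrow> (nat \<Rightarrow> 'w \<Rightarrow> 'c::countable)
    \<Rightarrow> (nat \<Rightarrow> 'w \<Rightarrow> 'r) \<Rightarrow> 'r measure \<Rightarrow> nat \<Rightarrow> ennreal" where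
  "dir_info_cc M p Mp q r Mr T =
     (\<Sum>t\<in>{1..T}. cond_mi M (hist p {1..t}) (PiM {1..t} (\<lambda>_. Mp)) (q t)
        (\<lambda>\<omega>. (hist q {1..<t} \<omega>, hist r {1..t} \<omega>))
        (PiM {1..<t} (\<lambda>_. count_space UNIV) \<Otimes>\<^sub>M PiM {1..t} (\<lambda>_. Mr)))"

definition cond_indep ::
  "'w measure \<Rightarrow> ('w \<Rightarrow> 'x) \<Rightarrow> 'x measure \<Rightarrow> ('w \<Rightarrow> 'y) \<Rightarrow> 'y measure \<Rightarrow> ('w \<Rightarrow> 'z) \<Rightarrow> 'z measure \<Rightarrow> bool"
  where
  "cond_indep M X MX Y MY Z MZ \<longleftrightarrow>
     (\<forall>A\<in>sets MX. \<forall>B\<in>sets MY. AE \<omega> in M.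
        nn_cond_exp M (sigma_of M Z MZ) (indicator {\<omega>\<in>space M. X \<omega> \<in> A \<and> Y \<omega> \<in> B}) \<omega>
      = nn_cond_exp M (sigma_of M Z MZ) (indicator {\<omega>\<in>space M. X \<omega> \<in> A}) \<omega>
        * nn_cond_exp M (sigma_of M Z MZ) (indicator {\<omega>\<in>space M. Y \<omega> \<in> B}) \<omega>)"

text \<open>Independence of two random variables with possibly different value types
  (the library's indep_var requires equal types).\<close>
definition indep_rv ::
  "'w measure \<Rightarrow> ('w \<Rightarrow> 'x) \<Rightarrow> 'x measure \<Rightarrow> ('w \<Rightarrow> 'y) \<Rightarrow> 'y measure \<Rightarrow> bool" where
  "indep_rv M X MX Y MY \<longleftrightarrow>
     (\<forall>A\<in>sets MX. \<forall>B\<in>sets MY.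
        measure M {\<omega>\<in>space M. X \<omega> \<in> A \<and> Y \<omega> \<in> B}
      = measure M {\<omega>\<in>space M. X \<omega> \<in> A} * measure M {\<omega>\<in>space M. Y \<omega> \<in> B})"

definition pos_def_mat :: "real^'n^'n \<Rightarrow> bool" where
  "pos_def_mat S \<longleftrightarrow> transpose S = S \<and> (\<forall>z. z \<noteq> 0 \<longrightarrow> 0 < z \<bullet> (S *v z))"

definition gauss_dens :: "real^'n^'n \<Rightarrow> real^'n \<Rightarrow> real" where
  "gauss_dens S z = exp (- (z \<bullet> (matrix_inv S *v z)) / 2) / sqrt ((2 * pi) ^ CARD('n) * det S)"

definition blockA :: "real^'n^'n \<Rightarrow> real^'m^'n \<Rightarrow> real^'n^'m \<Rightarrow> real^'m^'m
    \<Rightarrow> ((real^'n) \<times> (real^'m)) \<Rightarrow> ((real^'n) \<times> (real^'m))" where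
  "blockA A11 A12 A21 A22 = (\<lambda>(z1, z2). (A11 *v z1 + A12 *v z2, A21 *v z1 + A22 *v z2))"

definition blockB :: "real^'k^'n \<Rightarrow> real^'k^'m \<Rightarrow> real^'k \<Rightarrow> ((real^'n) \<times> (real^'m))" where
  "blockB B1 B2 = (\<lambda>v. (B1 *v v, B2 *v v))"

definition stabilizable :: "('s::real_normed_vector \<Rightarrow> 's) \<Rightarrow> ('i::real_normed_vector \<Rightarrow> 's) \<Rightarrow> bool" where
  "stabilizable A B \<longleftrightarrow> (\<exists>K. linear K \<and>
      (\<forall>z. (\<lambda>k. ((\<lambda>y. A y + B (K y)) ^^ k) z) \<longlonglongrightarrow> 0))"

definition prefix_free :: "bool list set \<Rightarrow> bool" where
  "prefix_free S \<longleftrightarrow> (\<forall>s\<in>S. \<forall>s'\<in>S. prefix s s' \<longrightarrow> s = s')"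

end

theory Submission
  imports Defs
begin


lemma prefix_free_sub: "prefix_free S \<Longrightarrow> T \<subseteq> S \<Longrightarrow> prefix_free T"
  unfolding prefix_free_def by blast

lemma kraft_fin_aux:
  "\<forall>S. prefix_free S \<and> (\<forall>s\<in>S. length s \<le> n) \<longrightarrow> (\<Sum>s\<in>S. (1/2::real)^length s) \<le> 1"
proof (induction n)
  case 0
  show ?case
  proof (intro allI impI)
    fix S :: "bool list set" assume "prefix_free S \<and> (\<forall>s\<in>S. length s \<le> 0)"
    then have "S \<subseteq> {[]}" by auto
    then have "S = {} \<or> S = {[]}" by auto
    then show "(\<Sum>s\<in>S. (1/2::real)^length s) \<le> 1" by auto
  qed
next
  case (Suc n)
  show ?case
  proof (intro allI impI)
    fix S :: "bool list set" assume A: "prefix_free S \<and> (\<forall>s\<in>S. length s \<le> Suc n)"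
    show "(\<Sum>s\<in>S. (1/2::real)^length s) \<le> 1"
    proof (cases "[] \<in> S")
      case True
      then have "S = {[]}" using A unfolding prefix_free_def by (metis Nil_prefix empty_iff insertI1 subsetI subset_singletonD)
      then show ?thesis by simp
    next
      case False
      define S1 where "S1 = {s. True # s \<in> S}"
      define S2 where "S2 = {s. False # s \<in> S}"
      have pf1: "prefix_free S1" using A unfolding prefix_free_def S1_def by (auto, metis Cons_prefix_Cons list.inject)
      have pf2: "prefix_free S2" using A unfolding prefix_free_def S2_def by (auto, metis Cons_prefix_Cons list.inject)
      have l1: "\<forall>s\<in>S1. length s \<le> n" using A unfolding S1_def by force
      have l2: "\<forall>s\<in>S2. length s \<le> n" using A unfolding S2_def by force
      have fin: "finite {s::bool list. length s \<le> n}"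
        using finite_lists_length_le[of "UNIV::bool set" n] by simp
      have f1: "finite S1" using l1 fin by (meson finite_subset subsetI mem_Collect_eq)
      have f2: "finite S2" using l2 fin by (meson finite_subset subsetI mem_Collect_eq)
      have Seq: "S = Cons True ` S1 \<union> Cons False ` S2"
      proof
        show "S \<subseteq> Cons True ` S1 \<union> Cons False ` S2"
        proof
          fix s assume "s \<in> S"
          with False obtain b t where "s = b # t" by (cases s) auto
          then show "s \<in> Cons True ` S1 \<union> Cons False ` S2"
            using \<open>s \<in> S\<close> unfolding S1_def S2_def by (cases b) auto
        qed
      qed (auto simp: S1_def S2_def)
      have "(\<Sum>s\<in>S. (1/2::real)^length s) = (\<Sum>s\<in>Cons True ` S1. (1/2::real)^length s) + (\<Sum>s\<in>Cons False ` S2. (1/2::real)^length s)"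
        unfolding Seq by (rule sum.union_disjoint) (use f1 f2 in auto)
      also have "\<dots> = (\<Sum>s\<in>S1. (1/2::real)^length (True # s)) + (\<Sum>s\<in>S2. (1/2::real)^length (False # s))"
        by (simp add: sum.reindex)
      also have "\<dots> = (1/2) * (\<Sum>s\<in>S1. (1/2::real)^length s) + (1/2) * (\<Sum>s\<in>S2. (1/2::real)^length s)"
        by (simp add: sum_distrib_left)
      also have "\<dots> \<le> (1/2) * 1 + (1/2) * 1"
        using Suc.IH pf1 pf2 l1 l2 by (intro add_mono mult_left_mono) auto
      finally show ?thesis by simp
    qed
  qed
qed

lemma kraft:
  assumes "prefix_free S"
  shows "(\<integral>\<^sup>+s. ennreal ((1/2)^length s) * indicator S s \<partial>count_space UNIV) \<le> 1"
proof -
  define f where "f = (\<lambda>n s. ennreal ((1/2)^length s) * indicator (S \<inter> {s. length s \<le> n}) s)"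
  have inc: "incseq f" unfolding f_def incseq_def le_fun_def
    by (auto split: split_indicator intro!: mult_left_mono)
  have sup: "(\<lambda>s. ennreal ((1/2)^length s) * indicator S s) = (\<lambda>s. SUP n. f n s)"
  proof
    fix s
    have "(SUP n. f n s) = f (length s) s"
    proof (rule antisym)
      show "(SUP n. f n s) \<le> f (length s) s"
        by (rule SUP_least) (auto simp: f_def split: split_indicator)
    qed (rule SUP_upper, simp)
    then show "ennreal ((1/2)^length s) * indicator S s = (SUP n. f n s)"
      by (simp add: f_def split: split_indicator)
  qed
  have fin: "\<And>n. finite (S \<inter> {s::bool list. length s \<le> n})"
    using finite_lists_length_le[of "UNIV::bool set"] by simp
  have "\<And>n. (\<integral>\<^sup>+s. f n s \<partial>count_space UNIV) \<le> 1"
  proof -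
    fix n
    have "(\<integral>\<^sup>+s. f n s \<partial>count_space UNIV) = (\<integral>\<^sup>+s. ennreal ((1/2)^length s) \<partial>count_space (S \<inter> {s. length s \<le> n}))"
      unfolding f_def by (subst nn_integral_count_space_indicator) auto
    also have "\<dots> = (\<Sum>s\<in>S \<inter> {s. length s \<le> n}. ennreal ((1/2)^length s))"
      using fin by (simp add: nn_integral_count_space_finite)
    also have "\<dots> = ennreal (\<Sum>s\<in>S \<inter> {s. length s \<le> n}. (1/2)^length s)"
      by (simp add: sum_ennreal)
    also have "\<dots> \<le> 1"
      using kraft_fin_aux[of n] prefix_free_sub[OF assms, of "S \<inter> {s. length s \<le> n}"] by auto
    finally show "(\<integral>\<^sup>+s. f n s \<partial>count_space UNIV) \<le> 1" .
  qed
  then show ?thesis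
    unfolding sup by (subst nn_integral_monotone_convergence_SUP[OF inc]) (auto intro: SUP_least)
qed



lemma real_part:
  fixes p q :: real and l :: nat
  assumes p: "0 < p" "p \<le> 1" and q: "0 < q" "q \<le> 1"
  shows "max 0 (p * log 2 (p / q)) + (1 / ln 2) * p \<le> real l * p + (1 / ln 2) * (p * ((1/2)^l / q))"
proof -
  define z where "z = (1/2::real)^l / q"
  have zpos: "0 < z" using q by (simp add: z_def)
  have lnz: "ln z = - (real l * ln 2) - ln q"
    using q by (simp add: z_def ln_div ln_realpow ln_inverse power_one_over ln_mult)
  have "ln z \<le> z - 1" using zpos by (rule ln_le_minus_one)
  then have k1: "- ln q \<le> real l * ln 2 + z - 1" using lnz by simp
  have ln2: "0 < ln (2::real)" by simp
  have k2: "- log 2 q \<le> real l + (z - 1) / ln 2"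
  proof -
    have "- log 2 q = (- ln q) / ln 2" by (simp add: log_def)
    also have "\<dots> \<le> (real l * ln 2 + z - 1) / ln 2" using divide_right_mono[OF k1, of "ln 2"] ln2 by simp
    also have "\<dots> = real l + (z - 1) / ln 2" using ln2 by (simp add: field_simps)
    finally show ?thesis .
  qed
  have k3: "0 \<le> - log 2 q" using q by simp
  have k4: "log 2 (p / q) \<le> - log 2 q" using p q by (simp add: log_divide)
  have "max 0 (p * log 2 (p / q)) \<le> p * (- log 2 q)"
    using mult_left_mono[OF k4, of p] mult_nonneg_nonneg[OF _ k3, of p] p by (simp del: minus_log_eq_powr)
  also have "\<dots> \<le> p * (real l + (z - 1) / ln 2)" using mult_left_mono[OF k2, of p] p by simp
  finally have "max 0 (p * log 2 (p / q)) \<le> p * (real l + (z - 1) / ln 2)" .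
  moreover have "p * (real l + (z - 1) / ln 2) = real l * p + (1 / ln 2) * (p * z) - (1 / ln 2) * p"
    using ln2 by (simp add: field_simps)
  ultimately show ?thesis unfolding z_def[symmetric] by linarith
qed

lemma pointwise:
  fixes p q :: real and l :: nat
  assumes p: "0 \<le> p" "p \<le> 1" and q: "0 \<le> q" "q \<le> 1"
  shows "e2ennreal (kl_term p q) + ennreal (1 / ln 2) * ennreal p
     \<le> of_nat l * ennreal p + ennreal (1 / ln 2) * (ennreal p * (ennreal ((1/2)^l) / ennreal q))"
proof (cases "p = 0")
  case True then show ?thesis by (simp add: kl_term_def)
next
  case pn: False
  show ?thesis
  proof (cases "q = 0")
    case True
    have "ennreal p * (ennreal ((1/2)^l) / ennreal q) = \<top>"
      using True pn p by (simp add: divide_ennreal_def ennreal_mult_top)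
    moreover have "ennreal (1 / ln 2) * \<top> = \<top>" by (simp add: ennreal_mult_top)
    ultimately show ?thesis by simp
  next
    case qn: False
    have pp: "0 < p" and qp: "0 < q" using pn qn p q by auto
    have "e2ennreal (kl_term p q) = ennreal (max 0 (p * log 2 (p / q)))"
      using pn qn by (simp add: kl_term_def ennreal_max_0)
    then have "e2ennreal (kl_term p q) + ennreal (1 / ln 2) * ennreal p
        = ennreal (max 0 (p * log 2 (p / q)) + (1 / ln 2) * p)"
    proof -
      have "ennreal (max 0 (p * log 2 (p / q)) + (1 / ln 2) * p) = ennreal (max 0 (p * log 2 (p / q))) + ennreal ((1 / ln 2) * p)"
        by (rule ennreal_plus) (use pp in auto)
      also have "ennreal ((1 / ln 2) * p) = ennreal (1 / ln 2) * ennreal p"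
        by (rule ennreal_mult) (use pp in auto)
      finally show ?thesis using \<open>e2ennreal (kl_term p q) = _\<close> by simp
    qed
    also have "\<dots> \<le> ennreal (real l * p + (1 / ln 2) * (p * ((1/2)^l / q)))"
      by (rule ennreal_leI, rule real_part) (use pp p qp q in auto)
    also have "\<dots> = of_nat l * ennreal p + ennreal (1 / ln 2) * (ennreal p * (ennreal ((1/2)^l) / ennreal q))"
      using pp qp by (simp add: ennreal_plus ennreal_mult'[symmetric] divide_ennreal ennreal_of_nat_eq_real_of_nat)
    finally show ?thesis .
  qed
qed



lemma kl_meas[measurable (raw)]:
  assumes [measurable]: "f \<in> borel_measurable M" "g \<in> borel_measurable M"
  shows "(\<lambda>\<omega>. kl_term (f \<omega>) (g \<omega>)) \<in> borel_measurable M"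
  unfolding kl_term_def log_def by measurable

lemma main_ineq:
  fixes Y :: "'w \<Rightarrow> bool list"
  assumes prob: "prob_space M" and X[measurable]: "X \<in> measurable M MX"
    and Z[measurable]: "Z \<in> measurable M MZ" and Y[measurable]: "Y \<in> measurable M (count_space UNIV)"
  shows "cond_mi M X MX Y Z MZ \<le> (\<integral>\<^sup>+ \<omega>. (\<integral>\<^sup>+ y. e2ennreal (kl_term (cprob M (sigma_of M (\<lambda>\<omega>. (X \<omega>, Z \<omega>)) (MX \<Otimes>\<^sub>M MZ)) Y y \<omega>)
          (cprob M (sigma_of M Z MZ) Y y \<omega>)) \<partial>count_space UNIV) \<partial>M)"
  unfolding cond_mi_def disc_KL_def
  by (intro nn_integral_mono order_trans[OF e2ennreal_mono[OF ereal_diff_le_self]]) auto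

lemma cond_le1:
  assumes "sigma_finite_subalgebra M H" "B \<in> sets M"
  shows "AE \<omega> in M. nn_cond_exp M H (indicator B) \<omega> \<le> 1"
proof -
  interpret sigma_finite_subalgebra M H by fact
  have "AE \<omega> in M. nn_cond_exp M H (indicator B) \<omega> \<le> nn_cond_exp M H (\<lambda>_. 1) \<omega>"
    by (rule nn_cond_exp_mono) (use assms(2) in \<open>auto split: split_indicator\<close>)
  moreover have "AE \<omega> in M. (\<lambda>_. 1::ennreal) \<omega> = nn_cond_exp M H (\<lambda>_. 1) \<omega>"
    by (rule nn_cond_exp_F_meas) simp
  ultimately show ?thesis by eventually_elim simp
qed

lemma cond_intg1:
  assumes "sigma_finite_subalgebra M H" "B \<in> sets M"
  shows "(\<integral>\<^sup>+\<omega>. nn_cond_exp M H (indicator B) \<omega> \<partial>M) = emeasure M B"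
proof -
  interpret sigma_finite_subalgebra M H by fact
  have "(\<integral>\<^sup>+\<omega>. nn_cond_exp M H (indicator B) \<omega> \<partial>M) = (\<integral>\<^sup>+\<omega>. (\<lambda>_. 1) \<omega> * nn_cond_exp M H (indicator B) \<omega> \<partial>M)"
    by simp
  also have "\<dots> = (\<integral>\<^sup>+\<omega>. (\<lambda>_. 1) \<omega> * indicator B \<omega> \<partial>M)"
    by (rule nn_cond_exp_intg) (use assms(2) in auto)
  also have "\<dots> = emeasure M B" using assms(2) by simp
  finally show ?thesis .
qed

context
  fixes M :: "'w measure" and X :: "'w \<Rightarrow> 'x" and MX and Z :: "'w \<Rightarrow> 'z" and MZ and Y :: "'w \<Rightarrow> bool list"
  assumes prob: "prob_space M" and X[measurable]: "X \<in> measurable M MX"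
    and Z[measurable]: "Z \<in> measurable M MZ" and Y[measurable]: "Y \<in> measurable M (count_space UNIV)"
begin

definition "FF = sigma_of M (\<lambda>\<omega>. (X \<omega>, Z \<omega>)) (MX \<Otimes>\<^sub>M MZ)"
definition "GG = sigma_of M Z MZ"

lemma XZ_meas: "(\<lambda>\<omega>. (X \<omega>, Z \<omega>)) \<in> measurable M (MX \<Otimes>\<^sub>M MZ)" by measurable

lemma subF: "subalgebra M FF"
  unfolding subalgebra_def FF_def sigma_of_def
  using sets_image_in_sets[of M "space M", OF refl XZ_meas] by auto

lemma subG: "subalgebra M GG"
  unfolding subalgebra_def GG_def sigma_of_def
  using sets_image_in_sets[of M "space M", OF refl Z] by auto

lemma Z_F: "Z \<in> measurable FF MZ"
proof -
  have "(\<lambda>\<omega>. (X \<omega>, Z \<omega>)) \<in> measurable FF (MX \<Otimes>\<^sub>M MZ)"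
    unfolding FF_def sigma_of_def
    by (rule measurable_vimage_algebra1) (use measurable_space[OF XZ_meas] in blast)
  from measurable_compose[OF this measurable_snd] show ?thesis by simp
qed

lemma subGF: "subalgebra FF GG"
  unfolding subalgebra_def
  using sets_image_in_sets[OF _ Z_F] subF subG
  by (auto simp: GG_def FF_def sigma_of_def subalgebra_def)

lemma finM: "finite_measure M" using prob by (simp add: prob_space_def)

interpretation Fi: finite_measure_subalgebra M FF
  using finM subF by (simp add: finite_measure_subalgebra_def finite_measure_subalgebra_axioms_def)
interpretation Gi: finite_measure_subalgebra M GG
  using finM subG by (simp add: finite_measure_subalgebra_def finite_measure_subalgebra_axioms_def)


lemma A_sets[measurable]: "{\<omega> \<in> space M. Y \<omega> = y} \<in> sets M"
  by measurable

lemma p_meas[measurable]: "cprob M FF Y y \<in> borel_measurable M"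
  unfolding cprob_def by measurable
lemma q_meas[measurable]: "cprob M GG Y y \<in> borel_measurable M"
  unfolding cprob_def by measurable
lemma q_measG: "cprob M GG Y y \<in> borel_measurable GG"
  unfolding cprob_def by measurable

lemma p_eq: "AE \<omega> in M. ennreal (cprob M FF Y y \<omega>) = nn_cond_exp M FF (indicator {\<omega> \<in> space M. Y \<omega> = y}) \<omega>
   \<and> 0 \<le> cprob M FF Y y \<omega> \<and> cprob M FF Y y \<omega> \<le> 1"
  using cond_le1[OF Fi.sigma_finite_subalgebra_axioms A_sets[of y]]
proof eventually_elim
  case (elim \<omega>)
  then have "nn_cond_exp M FF (indicator {\<omega> \<in> space M. Y \<omega> = y}) \<omega> < top"
    by (metis ennreal_one_less_top le_less_trans)
  then show ?case using elim enn2real_mono[OF elim] unfolding cprob_def by auto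
qed

lemma q_eq: "AE \<omega> in M. ennreal (cprob M GG Y y \<omega>) = nn_cond_exp M GG (indicator {\<omega> \<in> space M. Y \<omega> = y}) \<omega>
   \<and> 0 \<le> cprob M GG Y y \<omega> \<and> cprob M GG Y y \<omega> \<le> 1"
  using cond_le1[OF Gi.sigma_finite_subalgebra_axioms A_sets[of y]]
proof eventually_elim
  case (elim \<omega>)
  then have "nn_cond_exp M GG (indicator {\<omega> \<in> space M. Y \<omega> = y}) \<omega> < top"
    by (metis ennreal_one_less_top le_less_trans)
  then show ?case using elim enn2real_mono[OF elim] unfolding cprob_def by auto
qed

lemma intP: "(\<integral>\<^sup>+\<omega>. ennreal (cprob M FF Y y \<omega>) \<partial>M) = emeasure M {\<omega> \<in> space M. Y \<omega> = y}"
proof -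
  have "(\<integral>\<^sup>+\<omega>. ennreal (cprob M FF Y y \<omega>) \<partial>M) = (\<integral>\<^sup>+\<omega>. nn_cond_exp M FF (indicator {\<omega> \<in> space M. Y \<omega> = y}) \<omega> \<partial>M)"
    by (rule nn_integral_cong_AE) (use p_eq[of y] in auto)
  also have "\<dots> = emeasure M {\<omega> \<in> space M. Y \<omega> = y}"
    by (rule cond_intg1[OF Fi.sigma_finite_subalgebra_axioms A_sets])
  finally show ?thesis .
qed

lemma intQ: "(\<integral>\<^sup>+\<omega>. ennreal (cprob M GG Y y \<omega>) \<partial>M) = emeasure M {\<omega> \<in> space M. Y \<omega> = y}"
proof -
  have "(\<integral>\<^sup>+\<omega>. ennreal (cprob M GG Y y \<omega>) \<partial>M) = (\<integral>\<^sup>+\<omega>. nn_cond_exp M GG (indicator {\<omega> \<in> space M. Y \<omega> = y}) \<omega> \<partial>M)"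
    by (rule nn_integral_cong_AE) (use q_eq[of y] in auto)
  also have "\<dots> = emeasure M {\<omega> \<in> space M. Y \<omega> = y}"
    by (rule cond_intg1[OF Gi.sigma_finite_subalgebra_axioms A_sets])
  finally show ?thesis .
qed


lemma intPg: "(\<integral>\<^sup>+\<omega>. ennreal (cprob M FF Y y \<omega>) * (ennreal ((1/2)^length y) / ennreal (cprob M GG Y y \<omega>)) \<partial>M)
   \<le> ennreal ((1/2)^length y) * indicator {s. measure M {\<omega>\<in>space M. Y \<omega> = s} > 0} y"
proof -
  define a where "a = ennreal ((1/2)^length y)"
  define g where "g = (\<lambda>\<omega>. a / ennreal (cprob M GG Y y \<omega>))"
  define B where "B = {\<omega>\<in>space M. Y \<omega> = y}"
  have gG[measurable]: "g \<in> borel_measurable GG"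
    unfolding g_def using q_measG[of y] by measurable
  have gF[measurable]: "g \<in> borel_measurable FF"
    by (rule measurable_from_subalg[OF subGF gG])
  have gM[measurable]: "g \<in> borel_measurable M"
    by (rule measurable_from_subalg[OF subF gF])
  have "(\<integral>\<^sup>+\<omega>. ennreal (cprob M FF Y y \<omega>) * g \<omega> \<partial>M) = (\<integral>\<^sup>+\<omega>. g \<omega> * nn_cond_exp M FF (indicator B) \<omega> \<partial>M)"
    by (rule nn_integral_cong_AE) (use p_eq[of y] in \<open>auto simp: B_def mult.commute\<close>)
  also have "\<dots> = (\<integral>\<^sup>+\<omega>. g \<omega> * indicator B \<omega> \<partial>M)"
    by (rule Fi.nn_cond_exp_intg) (auto simp: B_def)
  also have "\<dots> = (\<integral>\<^sup>+\<omega>. g \<omega> * nn_cond_exp M GG (indicator B) \<omega> \<partial>M)"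
    by (rule Gi.nn_cond_exp_intg[symmetric]) (auto simp: B_def)
  also have "\<dots> = (\<integral>\<^sup>+\<omega>. g \<omega> * ennreal (cprob M GG Y y \<omega>) \<partial>M)"
    by (rule nn_integral_cong_AE) (use q_eq[of y] in \<open>auto simp: B_def\<close>)
  finally have eq: "(\<integral>\<^sup>+\<omega>. ennreal (cprob M FF Y y \<omega>) * g \<omega> \<partial>M) = (\<integral>\<^sup>+\<omega>. g \<omega> * ennreal (cprob M GG Y y \<omega>) \<partial>M)" .
  have gq: "g \<omega> * ennreal (cprob M GG Y y \<omega>) \<le> a" for \<omega>
  proof (cases "cprob M GG Y y \<omega> > 0")
    case True
    then show ?thesis unfolding g_def a_def
      by (simp add: divide_ennreal ennreal_mult'[symmetric])
  next
    case False
    then have "ennreal (cprob M GG Y y \<omega>) = 0" by (simp add: ennreal_eq_0_iff)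
    then show ?thesis by simp
  qed
  show ?thesis
  proof (cases "y \<in> {s. measure M {\<omega>\<in>space M. Y \<omega> = s} > 0}")
    case True
    have "(\<integral>\<^sup>+\<omega>. g \<omega> * ennreal (cprob M GG Y y \<omega>) \<partial>M) \<le> (\<integral>\<^sup>+\<omega>. a \<partial>M)"
      by (rule nn_integral_mono) (rule gq)
    also have "\<dots> = a" using prob by (simp add: prob_space.emeasure_space_1)
    finally show ?thesis using eq True by (simp add: a_def g_def)
  next
    case False
    then have "measure M B = 0" unfolding B_def by (simp add: not_less measure_le_0_iff)
    then have "emeasure M B = 0" using finM by (simp add: finite_measure.emeasure_eq_measure)
    then have "(\<integral>\<^sup>+\<omega>. ennreal (cprob M GG Y y \<omega>) \<partial>M) = 0" using intQ[of y] by (simp add: B_def)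
    then have "AE \<omega> in M. ennreal (cprob M GG Y y \<omega>) = 0"
      by (subst nn_integral_0_iff_AE[symmetric]) auto
    then have "(\<integral>\<^sup>+\<omega>. g \<omega> * ennreal (cprob M GG Y y \<omega>) \<partial>M) = 0"
      by (subst nn_integral_0_iff_AE) (auto elim: AE_mp)
    then show ?thesis using eq False by (simp add: a_def g_def)
  qed
qed


lemma per_y: "(\<integral>\<^sup>+\<omega>. e2ennreal (kl_term (cprob M FF Y y \<omega>) (cprob M GG Y y \<omega>)) \<partial>M)
    + ennreal (1 / ln 2) * emeasure M {\<omega> \<in> space M. Y \<omega> = y}
  \<le> of_nat (length y) * emeasure M {\<omega> \<in> space M. Y \<omega> = y}
    + ennreal (1 / ln 2) * (ennreal ((1/2)^length y) * indicator {s. measure M {\<omega>\<in>space M. Y \<omega> = s} > 0} y)"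
proof -
  let ?K = "\<lambda>\<omega>. e2ennreal (kl_term (cprob M FF Y y \<omega>) (cprob M GG Y y \<omega>))"
  let ?P = "\<lambda>\<omega>. ennreal (cprob M FF Y y \<omega>)"
  let ?g = "\<lambda>\<omega>. ennreal ((1/2)^length y) / ennreal (cprob M GG Y y \<omega>)"
  let ?c = "ennreal (1 / ln 2)"
  have gM[measurable]: "?g \<in> borel_measurable M" by measurable
  have "(\<integral>\<^sup>+\<omega>. ?K \<omega> \<partial>M) + ?c * emeasure M {\<omega> \<in> space M. Y \<omega> = y}
      = (\<integral>\<^sup>+\<omega>. ?K \<omega> \<partial>M) + ?c * (\<integral>\<^sup>+\<omega>. ?P \<omega> \<partial>M)" by (simp add: intP)
  also have "\<dots> = (\<integral>\<^sup>+\<omega>. ?K \<omega> + ?c * ?P \<omega> \<partial>M)"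
    by (simp add: nn_integral_add nn_integral_cmult)
  also have "\<dots> \<le> (\<integral>\<^sup>+\<omega>. of_nat (length y) * ?P \<omega> + ?c * (?P \<omega> * ?g \<omega>) \<partial>M)"
  proof (rule nn_integral_mono_AE)
    show "AE \<omega> in M. ?K \<omega> + ?c * ?P \<omega> \<le> of_nat (length y) * ?P \<omega> + ?c * (?P \<omega> * ?g \<omega>)"
      using p_eq[of y] q_eq[of y]
    proof eventually_elim
      case (elim \<omega>) then show ?case by (intro pointwise) auto
    qed
  qed
  also have "\<dots> = of_nat (length y) * (\<integral>\<^sup>+\<omega>. ?P \<omega> \<partial>M) + ?c * (\<integral>\<^sup>+\<omega>. ?P \<omega> * ?g \<omega> \<partial>M)"
    by (simp add: nn_integral_add nn_integral_cmult)
  also have "\<dots> \<le> of_nat (length y) * emeasure M {\<omega> \<in> space M. Y \<omega> = y}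
    + ?c * (ennreal ((1/2)^length y) * indicator {s. measure M {\<omega>\<in>space M. Y \<omega> = s} > 0} y)"
    unfolding intP by (intro add_mono mult_left_mono intPg order_refl) simp
  finally show ?thesis .
qed


lemma total:
  assumes pf: "prefix_free {s. measure M {\<omega>\<in>space M. Y \<omega> = s} > 0}"
  shows "cond_mi M X MX Y Z MZ \<le> (\<integral>\<^sup>+\<omega>. of_nat (length (Y \<omega>)) \<partial>M)"
proof -
  let ?K = "\<lambda>y \<omega>. e2ennreal (kl_term (cprob M FF Y y \<omega>) (cprob M GG Y y \<omega>))"
  let ?pi = "\<lambda>y. emeasure M {\<omega> \<in> space M. Y \<omega> = y}"
  let ?c = "ennreal (1 / ln 2)"
  let ?S = "{s. measure M {\<omega>\<in>space M. Y \<omega> = s} > 0}"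
  have Km[measurable]: "\<And>y. ?K y \<in> borel_measurable M" by measurable
  have 1: "cond_mi M X MX Y Z MZ \<le> (\<integral>\<^sup>+\<omega>. (\<integral>\<^sup>+y. ?K y \<omega> \<partial>count_space UNIV) \<partial>M)"
    unfolding FF_def GG_def by (rule main_ineq[OF prob X Z Y])
  have 2: "(\<integral>\<^sup>+\<omega>. (\<integral>\<^sup>+y. ?K y \<omega> \<partial>count_space UNIV) \<partial>M) = (\<integral>\<^sup>+y. (\<integral>\<^sup>+\<omega>. ?K y \<omega> \<partial>M) \<partial>count_space UNIV)"
    by (rule nn_integral_count_space_nn_integral) auto
  have ind: "\<And>y \<omega>. \<omega> \<in> space M \<Longrightarrow> indicator {\<omega> \<in> space M. Y \<omega> = y} \<omega> = (indicator {Y \<omega>} y :: ennreal)"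
    by (auto split: split_indicator)
  have 3: "(\<integral>\<^sup>+y. ?pi y \<partial>count_space UNIV) = 1"
  proof -
    have "(\<integral>\<^sup>+y. ?pi y \<partial>count_space UNIV) = (\<integral>\<^sup>+y. (\<integral>\<^sup>+\<omega>. indicator {\<omega> \<in> space M. Y \<omega> = y} \<omega> \<partial>M) \<partial>count_space UNIV)"
      by simp
    also have "\<dots> = (\<integral>\<^sup>+\<omega>. (\<integral>\<^sup>+y. indicator {\<omega> \<in> space M. Y \<omega> = y} \<omega> \<partial>count_space UNIV) \<partial>M)"
      by (rule nn_integral_count_space_nn_integral[symmetric]) auto
    also have "\<dots> = (\<integral>\<^sup>+\<omega>. 1 \<partial>M)"
      by (rule nn_integral_cong) (simp add: ind)
    also have "\<dots> = 1" using prob by (simp add: prob_space.emeasure_space_1)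
    finally show ?thesis .
  qed
  have 4: "(\<integral>\<^sup>+y. of_nat (length y) * ?pi y \<partial>count_space UNIV) = (\<integral>\<^sup>+\<omega>. of_nat (length (Y \<omega>)) \<partial>M)"
  proof -
    have "(\<integral>\<^sup>+y. of_nat (length y) * ?pi y \<partial>count_space UNIV) = (\<integral>\<^sup>+y. (\<integral>\<^sup>+\<omega>. of_nat (length y) * indicator {\<omega> \<in> space M. Y \<omega> = y} \<omega> \<partial>M) \<partial>count_space UNIV)"
      by (simp add: nn_integral_cmult)
    also have "\<dots> = (\<integral>\<^sup>+\<omega>. (\<integral>\<^sup>+y. of_nat (length y) * indicator {\<omega> \<in> space M. Y \<omega> = y} \<omega> \<partial>count_space UNIV) \<partial>M)"
      by (rule nn_integral_count_space_nn_integral[symmetric]) auto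
    also have "\<dots> = (\<integral>\<^sup>+\<omega>. of_nat (length (Y \<omega>)) \<partial>M)"
      by (rule nn_integral_cong) (simp add: ind)
    finally show ?thesis .
  qed
  have 5: "(\<integral>\<^sup>+y. ennreal ((1/2)^length y) * indicator ?S y \<partial>count_space UNIV) \<le> 1"
    by (rule kraft[OF pf])
  have 6: "(\<integral>\<^sup>+y. (\<integral>\<^sup>+\<omega>. ?K y \<omega> \<partial>M) \<partial>count_space UNIV) + ?c * (\<integral>\<^sup>+y. ?pi y \<partial>count_space UNIV)
     \<le> (\<integral>\<^sup>+y. of_nat (length y) * ?pi y \<partial>count_space UNIV) + ?c * (\<integral>\<^sup>+y. ennreal ((1/2)^length y) * indicator ?S y \<partial>count_space UNIV)"
  proof -
    have "(\<integral>\<^sup>+y. (\<integral>\<^sup>+\<omega>. ?K y \<omega> \<partial>M) \<partial>count_space UNIV) + ?c * (\<integral>\<^sup>+y. ?pi y \<partial>count_space UNIV)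
        = (\<integral>\<^sup>+y. (\<integral>\<^sup>+\<omega>. ?K y \<omega> \<partial>M) + ?c * ?pi y \<partial>count_space UNIV)"
      by (simp add: nn_integral_add nn_integral_cmult)
    also have "\<dots> \<le> (\<integral>\<^sup>+y. of_nat (length y) * ?pi y + ?c * (ennreal ((1/2)^length y) * indicator ?S y) \<partial>count_space UNIV)"
      by (rule nn_integral_mono) (rule per_y)
    also have "\<dots> = (\<integral>\<^sup>+y. of_nat (length y) * ?pi y \<partial>count_space UNIV) + ?c * (\<integral>\<^sup>+y. ennreal ((1/2)^length y) * indicator ?S y \<partial>count_space UNIV)"
      by (simp add: nn_integral_add nn_integral_cmult)
    finally show ?thesis .
  qed
  define KK where "KK = (\<integral>\<^sup>+y. (\<integral>\<^sup>+\<omega>. ?K y \<omega> \<partial>M) \<partial>count_space UNIV)"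
  define EE where "EE = (\<integral>\<^sup>+\<omega>. of_nat (length (Y \<omega>)) \<partial>M)"
  have 7: "KK + ?c * 1 \<le> EE + ?c * (\<integral>\<^sup>+y. ennreal ((1/2)^length y) * indicator ?S y \<partial>count_space UNIV)"
    using 6 unfolding 3 4 KK_def[symmetric] EE_def[symmetric] .
  have "KK + ?c \<le> EE + ?c * 1"
    using order_trans[OF 7 add_mono[OF order_refl mult_left_mono[OF 5]]] by simp
  then have "?c + KK \<le> ?c + EE" by (simp add: add.commute)
  then have "KK \<le> EE" by (simp add: ennreal_add_left_cancel_le)
  then show ?thesis using 1 2 unfolding KK_def EE_def by simp
qed

end

theorem theorem1:
  fixes M :: "'w measure"
    and A11 :: "real^'n^'n" and A12 :: "real^'m^'n" and A21 :: "real^'n^'m" and A22 :: "real^'m^'m"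
    and B1 :: "real^'k^'n" and B2 :: "real^'k^'m"
    and W11 :: "real^'n^'n" and W22 :: "real^'m^'m"
    and x1 :: "nat \<Rightarrow> 'w \<Rightarrow> real^'n" and x2 :: "nat \<Rightarrow> 'w \<Rightarrow> real^'m"
    and w :: "nat \<Rightarrow> 'w \<Rightarrow> ((real^'n) \<times> (real^'m))"
    and u :: "nat \<Rightarrow> 'w \<Rightarrow> real^'k"
    and a :: "nat \<Rightarrow> 'w \<Rightarrow> bool list"
    and T :: nat
  defines "x \<equiv> (\<lambda>t \<omega>. (x1 t \<omega>, x2 t \<omega>))"
  assumes prob: "prob_space M"
    and stab: "stabilizable (blockA A11 A12 A21 A22) (blockB B1 B2)"
    and W11_pd: "pos_def_mat W11" and W22_pd: "pos_def_mat W22"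
    and meas_x1: "\<And>t. x1 t \<in> borel_measurable M"
    and meas_x2: "\<And>t. x2 t \<in> borel_measurable M"
    and meas_w: "\<And>t. w t \<in> borel_measurable M"
    and meas_u: "\<And>t. u t \<in> borel_measurable M"
    and meas_a: "\<And>t. a t \<in> measurable M (count_space UNIV)"
    and dyn: "\<And>t \<omega>. t \<ge> 1 \<Longrightarrow> \<omega> \<in> space M \<Longrightarrow>
       x (Suc t) \<omega> = blockA A11 A12 A21 A22 (x t \<omega>) + blockB B1 B2 (u t \<omega>) + w t \<omega>"
    and noise_gauss: "\<And>t. t \<ge> 1 \<Longrightarrow>
       distributed M lborel (w t) (\<lambda>(z1, z2). ennreal (gauss_dens W11 z1 * gauss_dens W22 z2))"
    and noise_iid: "prob_space.indep_vars M (\<lambda>_. borel) w {1..}"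
    and noise_indep: "\<And>t. t \<ge> 1 \<Longrightarrow>
       indep_rv M (w t) borel
         (\<lambda>\<omega>. (hist x {1..t} \<omega>, hist a {1..t} \<omega>, hist u {1..t} \<omega>))
         (PiM {1..t} (\<lambda>_. borel) \<Otimes>\<^sub>M PiM {1..t} (\<lambda>_. count_space UNIV) \<Otimes>\<^sub>M PiM {1..t} (\<lambda>_. borel))"
    and encoder: "\<And>t. t \<ge> 1 \<Longrightarrow>
       cond_indep M (a t) (count_space UNIV)
         (hist u {1..<t}) (PiM {1..<t} (\<lambda>_. borel))
         (\<lambda>\<omega>. (hist x {1..t} \<omega>, hist a {1..<t} \<omega>))
         (PiM {1..t} (\<lambda>_. borel) \<Otimes>\<^sub>M PiM {1..<t} (\<lambda>_. count_space UNIV))"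
    and controller: "\<And>t. t \<ge> 1 \<Longrightarrow>
       cond_indep M (u t) borel
         (hist x1 {1..t}) (PiM {1..t} (\<lambda>_. borel))
         (\<lambda>\<omega>. (hist a {1..t} \<omega>, hist x2 {1..t} \<omega>, hist u {1..<t} \<omega>))
         (PiM {1..t} (\<lambda>_. count_space UNIV) \<Otimes>\<^sub>M PiM {1..t} (\<lambda>_. borel) \<Otimes>\<^sub>M PiM {1..<t} (\<lambda>_. borel))"
    and prefix_free: "\<And>t. t \<ge> 1 \<Longrightarrow>
       prefix_free {s. measure M {\<omega>\<in>space M. a t \<omega> = s} > 0}"
    and T_pos: "T \<ge> 1"
  shows "(\<Sum>t\<in>{1..T}. \<integral>\<^sup>+ \<omega>. of_nat (length (a t \<omega>)) \<partial>M)
           \<ge> dir_info_cc M x borel a x2 borel T"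
  proof -
  have hx[measurable]: "\<And>t. x t \<in> borel_measurable M"
    unfolding x_def using meas_x1 meas_x2 by (metis borel_measurable_Pair)
  have "\<And>t. t \<in> {1..T} \<Longrightarrow>
      cond_mi M (hist x {1..t}) (PiM {1..t} (\<lambda>_. borel)) (a t)
        (\<lambda>\<omega>. (hist a {1..<t} \<omega>, hist x2 {1..t} \<omega>))
        (PiM {1..<t} (\<lambda>_. count_space UNIV) \<Otimes>\<^sub>M PiM {1..t} (\<lambda>_. borel))
      \<le> (\<integral>\<^sup>+ \<omega>. of_nat (length (a t \<omega>)) \<partial>M)"
  proof -
    fix t assume t: "t \<in> {1..T}"
    show "cond_mi M (hist x {1..t}) (PiM {1..t} (\<lambda>_. borel)) (a t)
        (\<lambda>\<omega>. (hist a {1..<t} \<omega>, hist x2 {1..t} \<omega>))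
        (PiM {1..<t} (\<lambda>_. count_space UNIV) \<Otimes>\<^sub>M PiM {1..t} (\<lambda>_. borel))
      \<le> (\<integral>\<^sup>+ \<omega>. of_nat (length (a t \<omega>)) \<partial>M)"
    proof (rule total[OF prob])
      show "hist x {1..t} \<in> measurable M (PiM {1..t} (\<lambda>_. borel))"
        unfolding hist_def by (intro measurable_restrict) (rule hx)
      show "(\<lambda>\<omega>. (hist a {1..<t} \<omega>, hist x2 {1..t} \<omega>)) \<in> measurable M
          (PiM {1..<t} (\<lambda>_. count_space UNIV) \<Otimes>\<^sub>M PiM {1..t} (\<lambda>_. borel))"
        unfolding hist_def by (intro measurable_Pair measurable_restrict meas_a meas_x2)
      show "a t \<in> measurable M (count_space UNIV)" by (rule meas_a)
      show "prefix_free {s. measure M {\<omega>\<in>space M. a t \<omega> = s} > 0}"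
        using prefix_free t by auto
    qed
  qed
  then show ?thesis unfolding dir_info_cc_def by (rule sum_mono)
qed

end
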